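(* Fix $\sigma\in(0,\tfrac12)$. There exist $\lambda^{*}>0$ and $s^{*}\in(0,1)$ such that: (i) for all $\lambda\in(0,\lambda^{*})$, $\mathcal{I}^0_\lambda=(0,1)$; (ii) for $\lambda=\lambda^{*}$, $\mathcal{I}^0_\lambda=(0,1)\setminus\{s^{*}\}$; (iii) for all $\lambda>\lambda^{*}$ there exist $s_0,s_1\in(0,1)$ with $s_0<s^{*}<s_1$ such that $\mathcal{I}^0_\lambda=(0,s_0)\cup(s_1,1)$.
   Context: Let $g(s)=s^2(1-s)$ and $G(u)=u^3/3-u^4/4$ on $[0,1]$. For $\lambda>0$ and $s\in(0,1)$, let $(u_s,v_s)$ be the unique solution, on its maximal interval of existence, of $u'=v$, $v'=-\lambda g(u)$, $u(0)=s$, $v(0)=0$. Let $T_0(s)=T_0(s,\lambda)$ denote the time taken by $(u_s,v_s)$ to go from the point $(s,0)$ to the half-line $\{0\}\times(-\infty,0)$ moving forward along the level line $v^2+2\lambda G(u)=2\lambda G(s)$. Set $\mathcal{I}^0_\lambda=\{s\in(0,1): T_0(s)>\sigma\}$. *)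

theory Defs
  imports "HOL-Analysis.Analysis"
begin

definition g :: "real \<Rightarrow> real" where
  "g s = s^2 * (1 - s)"

definition G :: "real \<Rightarrow> real" where
  "G u = u^3/3 - u^4/4"

definition is_sol :: "real \<Rightarrow> real \<Rightarrow> real \<Rightarrow> (real \<Rightarrow> real) \<Rightarrow> (real \<Rightarrow> real) \<Rightarrow> bool" where
  "is_sol lam s t u v \<longleftrightarrow> u 0 = s \<and> v 0 = 0 \<and>
     (\<forall>\<tau>\<in>{0..t}. (u has_real_derivative v \<tau>) (at \<tau> within {0..t}) \<and>
                  (v has_real_derivative (- lam * g (u \<tau>))) (at \<tau> within {0..t}))"

definition T0 :: "real \<Rightarrow> real \<Rightarrow> real" where
  "T0 lam s = (THE t. t > 0 \<and> (\<exists>u v. is_sol lam s t u v \<and> u t = 0 \<and> v t < 0 \<and>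
                  (\<forall>\<tau>\<in>{0..<t}. u \<tau> \<noteq> 0 \<or> v \<tau> \<ge> 0)))"

definition I0 :: "real \<Rightarrow> real \<Rightarrow> real set" where
  "I0 \<sigma> lam = {s \<in> {0<..<1}. T0 lam s > \<sigma>}"

end

theory Submission
  imports Defs
begin


definition al :: "real \<Rightarrow> real" where "al y = 1 - y^2 + y^4/3"
definition be :: "real \<Rightarrow> real" where "be y = 1 - 3/2*y^2 + y^4 - y^6/4"
definition NN :: "real \<Rightarrow> real \<Rightarrow> real" where "NN s y = al y - s * be y"

lemma NN_G: "s^3 * y^2 * NN s y = G s - G (s*(1-y^2))"
  unfolding NN_def al_def be_def G_def by (simp add: field_simps eval_nat_numeral)

lemma be_bounds: assumes "0 \<le> y" "y \<le> 1" shows "1/4 \<le> be y" "be y \<le> 1"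
proof -
  define t where "t = y^2"
  have be: "be y = 1 - 3/2*t + t^2 - t^3/4" unfolding be_def t_def by (simp add: power_mult[symmetric])
  have t: "0 \<le> t" "t \<le> 1" using assms t_def by (auto simp: power_le_one)
  have e1: "be y - 1/4 = (1-t)*(3 - 3*t + t^2)/4" unfolding be by (simp add: field_simps eval_nat_numeral)
  have "0 \<le> 3 - 3*t + t^2" using t by (simp add: power2_eq_square)
  then have "0 \<le> (1-t)*(3 - 3*t + t^2)" using t by simp
  then show "1/4 \<le> be y" using e1 by linarith
  have e2: "1 - be y = t*(6 - 4*t + t^2)/4" unfolding be by (simp add: field_simps eval_nat_numeral)
  have "0 \<le> 6 - 4*t + t^2" using t by (simp add: power2_eq_square)
  then have "0 \<le> t*(6 - 4*t + t^2)" using t by simp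
  then show "be y \<le> 1" using e2 by linarith
qed

lemma al_be: assumes "0 \<le> y" "y \<le> 1" shows "0 \<le> al y - be y" "al y - be y \<le> y^2/2"
proof -
  define t where "t = y^2"
  have e: "al y - be y = t*(6 - 8*t + 3*t^2)/12" unfolding al_def be_def t_def
    by (simp add: field_simps eval_nat_numeral)
  have t: "0 \<le> t" "t \<le> 1" using assms t_def by (auto simp: power_le_one)
  have "6 - 8*t + 3*t^2 = 3*(t - 4/3)^2 + 2/3" by (simp add: field_simps eval_nat_numeral)
  hence "0 \<le> 6 - 8*t + 3*t^2" by (metis add_nonneg_nonneg zero_le_power2 mult_nonneg_nonneg zero_le_numeral zero_le_divide_iff)
  then show "0 \<le> al y - be y" unfolding e using t by simp
  have "6 - 8*t + 3*t^2 = 6 - t*(8 - 3*t)" by (simp add: field_simps eval_nat_numeral)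
  moreover have "0 \<le> t*(8 - 3*t)" using t by simp
  ultimately have "6 - 8*t + 3*t^2 \<le> 6" by linarith
  hence "t*(6 - 8*t + 3*t^2) \<le> t * 6" using t by (simp add: mult_left_mono)
  then show "al y - be y \<le> y^2/2" unfolding e t_def by simp
qed

lemma NN_pos: assumes "s < 1" "0 \<le> y" "y \<le> 1" shows "0 < NN s y"
proof -
  have "NN s y = (al y - be y) + (1 - s) * be y" unfolding NN_def by (simp add: algebra_simps)
  moreover have "0 < (1-s) * be y" using be_bounds[OF assms(2,3)] assms by simp
  ultimately show ?thesis using al_be[OF assms(2,3)] by linarith
qed

lemma NN_upper: assumes "0 \<le> s" "s < 1" "0 \<le> y" "y \<le> 1" shows "NN s y \<le> (y + sqrt (1-s))^2"
proof -
  have "NN s y = (al y - be y) + (1 - s) * be y" unfolding NN_def by (simp add: algebra_simps)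
  also have "(1 - s) * be y \<le> (1-s)" using be_bounds[OF assms(3,4)] assms mult_left_mono[of "be y" 1 "1-s"] by simp
  hence "(al y - be y) + (1 - s) * be y \<le> y^2/2 + (1-s)" using al_be[OF assms(3,4)] by linarith
  also have "\<dots> \<le> (y + sqrt (1-s))^2" using assms by (simp add: power2_sum)
  finally show ?thesis .
qed

lemma NN_le1: assumes "0 \<le> s" "0 \<le> y" "y \<le> 1" shows "NN s y \<le> 1"
proof -
  have "y^4 = y^2 * y^2" by (simp add: eval_nat_numeral)
  moreover have "y^2 * y^2 \<le> y^2 * 1" using assms by (intro mult_left_mono) (auto simp: power_le_one)
  ultimately have "y^4 \<le> y^2" by simp
  moreover have "0 \<le> y^4" by simp
  ultimately have "al y \<le> 1" unfolding al_def by linarith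
  moreover have "0 \<le> s * be y" using be_bounds[OF assms(2,3)] assms by simp
  ultimately show ?thesis unfolding NN_def by simp
qed

lemma NN_deriv: "NN s y + y * ((-2*y + 4*y^3/3) - s*(-3*y + 4*y^3 - 3/2*y^5))/2 = (1-y^2)^2*(1 - s*(1-y^2))"
  unfolding NN_def al_def be_def by (simp add: field_simps eval_nat_numeral)

lemma NN_has_deriv: "((NN s) has_real_derivative ((-2*y + 4*y^3/3) - s*(-3*y + 4*y^3 - 3/2*y^5))) (at y within S)"
  unfolding NN_def al_def be_def
  by (rule derivative_eq_intros refl | simp add: field_simps eval_nat_numeral)+

lemma NN_cont: "continuous_on A (NN s)"
  unfolding NN_def al_def be_def by (intro continuous_intros) auto

lemma NN_affine: "NN ((1-t)*a + t*b) y = (1-t) * NN a y + t * NN b y"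
  unfolding NN_def by (simp add: algebra_simps)

lemma G_deriv: "(G has_real_derivative g x) (at x within S)"
  unfolding G_def g_def
  by (rule derivative_eq_intros refl | simp add: field_simps eval_nat_numeral)+

lemma g_pos: "x \<noteq> 0 \<Longrightarrow> x < 1 \<Longrightarrow> 0 < g x"
  unfolding g_def by simp

lemma G_strict_aux: assumes "b < a" "\<And>x. b < x \<Longrightarrow> x < a \<Longrightarrow> 0 < g x" shows "G b < G a"
  apply (rule DERIV_pos_imp_increasing_open[OF assms(1)])
  using G_deriv assms(2) apply blast
  using G_deriv by (meson DERIV_continuous_on)

lemma G_strict: assumes "b < a" "a \<le> 1" shows "G b < G a"
proof -
  have c1: "G p < G q" if "p < q" "q \<le> 0" for p q
    using that by (intro G_strict_aux) (auto intro!: g_pos)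
  have c2: "G p < G q" if "p < q" "0 \<le> p" "q \<le> 1" for p q
    using that by (intro G_strict_aux) (auto intro!: g_pos)
  show ?thesis
  proof (cases "a \<le> 0")
    case True then show ?thesis using c1 assms by blast
  next
    case False
    show ?thesis
    proof (cases "0 \<le> b")
      case True then show ?thesis using c2 assms by blast
    next
      case False
      then have "G b < G 0" using c1 by simp
      also have "G 0 < G a" using c2 \<open>\<not> a \<le> 0\<close> assms by simp
      finally show ?thesis .
    qed
  qed
qed



definition FF :: "real \<Rightarrow> real" where "FF s = integral {0..1} (\<lambda>y. 1 / sqrt (NN s y))"
definition RR :: "real \<Rightarrow> real" where "RR s = FF s / sqrt s"

lemma integrand_cont: assumes "s < 1" shows "continuous_on {0..1} (\<lambda>y. 1 / sqrt (NN s y))"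
proof -
  have "\<forall>y\<in>{0..1}. sqrt (NN s y) \<noteq> 0" using NN_pos[OF assms] by force
  then show ?thesis by (intro continuous_intros NN_cont) auto
qed

lemma integrand_int: "s < 1 \<Longrightarrow> (\<lambda>y. 1 / sqrt (NN s y)) integrable_on {0..1}"
  using integrand_cont integrable_continuous_interval by blast

lemma FF_ge1: assumes "0 \<le> s" "s < 1" shows "1 \<le> FF s"
proof -
  have "integral {0..1} (\<lambda>y::real. 1::real) \<le> FF s"
    unfolding FF_def
  proof (rule integral_le[OF _ integrand_int[OF assms(2)]])
    show "(\<lambda>y::real. 1::real) integrable_on {0..1}" by (rule integrable_const_ivl)
    fix y :: real assume y: "y \<in> {0..1}"
    have "0 < NN s y" "NN s y \<le> 1" using NN_pos NN_le1 y assms by auto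
    then have "sqrt (NN s y) \<le> 1" "0 < sqrt (NN s y)" by auto
    then show "1 \<le> 1 / sqrt (NN s y)" by (simp add: field_simps)
  qed
  then show ?thesis by simp
qed

lemma FF_lower: assumes "0 \<le> s" "s < 1" shows "- ln (1 - s) / 2 \<le> FF s"
proof -
  define e where "e = sqrt (1 - s)"
  have e: "0 < e" "e \<le> 1" using assms e_def by auto
  have hi: "((\<lambda>y. 1 / (y + e)) has_integral (ln (1 + e) - ln (0 + e))) {0..1}"
  proof (rule fundamental_theorem_of_calculus)
    fix x :: real assume x: "x \<in> {0..1}"
    show "((\<lambda>y. ln (y + e)) has_vector_derivative 1 / (x + e)) (at x within {0..1})"
      unfolding has_real_derivative_iff_has_vector_derivative[symmetric]
      using x e by (auto intro!: derivative_eq_intros)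
  qed simp
  have "ln (1 + e) - ln (0 + e) \<le> FF s"
    unfolding FF_def
  proof (rule has_integral_le[OF hi integrable_integral[OF integrand_int[OF assms(2)]]])
    fix y :: real assume y: "y \<in> {0..1}"
    have "0 < NN s y" "NN s y \<le> (y + e)^2" using NN_pos NN_upper y assms e_def by auto
    then have "sqrt (NN s y) \<le> y + e" "0 < sqrt (NN s y)"
      using y e real_sqrt_le_mono[of "NN s y" "(y+e)^2"] by auto
    moreover have "0 < y + e" using y e by simp
    ultimately show "1 / (y + e) \<le> 1 / sqrt (NN s y)" by (intro divide_left_mono) (auto intro: mult_pos_pos)
  qed
  moreover have "0 \<le> ln (1 + e)" using e by simp
  moreover have "ln e = ln (1 - s) / 2" unfolding e_def using assms by (simp add: ln_sqrt)
  ultimately show ?thesis by simp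
qed

lemma invsqrt_convex: "convex_on {0<..} (\<lambda>z::real. 1 / sqrt z)"
proof (rule convex_on_realI[where f'="\<lambda>z. - 1 / (2 * z * sqrt z)"])
  show "connected {0::real<..}" by simp
  fix x :: real assume x: "x \<in> {0<..}"
  show "((\<lambda>z. 1 / sqrt z) has_real_derivative - 1 / (2 * x * sqrt x)) (at x)"
    using x by (auto intro!: derivative_eq_intros simp: field_simps)
next
  fix x y :: real assume xy: "x \<in> {0<..}" "y \<in> {0<..}" "x \<le> y"
  have "sqrt x \<le> sqrt y" using xy by simp
  then have "x * sqrt x \<le> y * sqrt y" using xy by (intro mult_mono) auto
  then have "2 * x * sqrt x \<le> 2 * y * sqrt y" by simp
  moreover have "0 < 2 * x * sqrt x" using xy by simp
  ultimately have "inverse (2 * y * sqrt y) \<le> inverse (2 * x * sqrt x)" by (rule le_imp_inverse_le)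
  then have "1 / (2 * y * sqrt y) \<le> 1 / (2 * x * sqrt x)" by (simp only: inverse_eq_divide)
  then show "- 1 / (2 * x * sqrt x) \<le> - 1 / (2 * y * sqrt y)" by simp
qed

lemma FF_convex: "convex_on {0<..<1} FF"
proof (rule convex_onI)
  show "convex {0::real<..<1}" by simp
  fix t x y :: real assume t: "0 < t" "t < 1" and xy: "x \<in> {0<..<1}" "y \<in> {0<..<1}"
  let ?q = "(1 - t) *\<^sub>R x + t *\<^sub>R y"
  have q: "?q < 1" using t xy
    by (simp add: convex_bound_lt)
  have i1: "(\<lambda>z. (1 - t) * (1 / sqrt (NN x z))) integrable_on {0..1}"
    using integrable_on_cmult_left[OF integrand_int, of x "1-t"] xy by simp
  have i2: "(\<lambda>z. t * (1 / sqrt (NN y z))) integrable_on {0..1}"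
    using integrable_on_cmult_left[OF integrand_int, of y "t"] xy by simp
  have "FF ?q \<le> integral {0..1} (\<lambda>z. (1 - t) * (1 / sqrt (NN x z)) + t * (1 / sqrt (NN y z)))"
    unfolding FF_def
  proof (rule integral_le[OF integrand_int[OF q]])
    show "(\<lambda>z. (1 - t) * (1 / sqrt (NN x z)) + t * (1 / sqrt (NN y z))) integrable_on {0..1}"
      by (rule integrable_add[OF i1 i2])
    fix z :: real assume z: "z \<in> {0..1}"
    have p: "NN x z \<in> {0<..}" "NN y z \<in> {0<..}" using NN_pos xy z by auto
    have "NN ?q z = (1 - t) *\<^sub>R NN x z + t *\<^sub>R NN y z" using NN_affine by simp
    then show "1 / sqrt (NN ?q z) \<le> (1 - t) * (1 / sqrt (NN x z)) + t * (1 / sqrt (NN y z))"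
      using convex_onD[OF invsqrt_convex, of t "NN x z" "NN y z"] t p by simp
  qed
  also have "\<dots> = (1 - t) * FF x + t * FF y"
  proof -
    have a: "integral {0..1} (\<lambda>z. (1 - t) * (1 / sqrt (NN x z))) = (1-t) * FF x"
      unfolding FF_def using integral_mult[OF integrand_int, of x "1-t"] xy by simp
    have b: "integral {0..1} (\<lambda>z. t * (1 / sqrt (NN y z))) = t * FF y"
      unfolding FF_def using integral_mult[OF integrand_int, of y "t"] xy by simp
    show ?thesis using integral_add[OF i1 i2] a b by (simp only:)
  qed
  finally show "FF ?q \<le> (1 - t) * FF x + t * FF y" .
qed

lemma FF_cont: "continuous_on {0<..<1} FF"
  using convex_on_continuous[OF _ FF_convex] by simp

lemma RR_cont: "continuous_on {0<..<1} RR"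
  unfolding RR_def using FF_cont by (intro continuous_intros) auto



lemma sqrt_concave:
  assumes "0 \<le> x" "0 \<le> y" "0 \<le> t" "t \<le> 1"
  shows "(1-t) * sqrt x + t * sqrt y \<le> sqrt ((1-t)*x + t*y)"
    and "x \<noteq> y \<Longrightarrow> 0 < t \<Longrightarrow> t < 1 \<Longrightarrow> (1-t) * sqrt x + t * sqrt y < sqrt ((1-t)*x + t*y)"
proof -
  define A where "A = sqrt x"
  define B where "B = sqrt y"
  have xA: "x = A^2" "y = B^2" using assms A_def B_def by auto
  have e: "((1-t) * A + t * B)^2 = ((1-t)*x + t*y) - t*(1-t)*(A-B)^2"
    unfolding xA by (simp add: algebra_simps power2_eq_square)
  have "0 \<le> t*(1-t)*(A-B)^2" using assms by simp
  then show "(1-t) * sqrt x + t * sqrt y \<le> sqrt ((1-t)*x + t*y)"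
    unfolding A_def[symmetric] B_def[symmetric] using e by (intro real_le_rsqrt) linarith
  assume h: "x \<noteq> y" "0 < t" "t < 1"
  have "A \<noteq> B" using h xA by auto
  then have "0 < t*(1-t)*(A-B)^2" using h by simp
  then show "(1-t) * sqrt x + t * sqrt y < sqrt ((1-t)*x + t*y)"
    unfolding A_def[symmetric] B_def[symmetric] using e by (intro real_less_rsqrt) linarith
qed

lemma RR_le_iff: "0 < s \<Longrightarrow> (RR s \<le> c) = (FF s \<le> c * sqrt s)"
  unfolding RR_def by (simp add: pos_divide_le_eq)

lemma RR_less_iff: "0 < s \<Longrightarrow> (RR s < c) = (FF s < c * sqrt s)"
  unfolding RR_def by (simp add: pos_divide_less_eq)

lemma RR_sub:
  assumes a: "0 < a" "a < 1" and b: "0 < b" "b < 1" and t: "0 \<le> t" "t \<le> 1"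
    and c: "0 \<le> c" and Ra: "RR a \<le> c" and Rb: "RR b \<le> c"
  shows "RR ((1-t)*a + t*b) \<le> c"
    and "a \<noteq> b \<Longrightarrow> 0 < t \<Longrightarrow> t < 1 \<Longrightarrow> 0 < c \<Longrightarrow> RR ((1-t)*a + t*b) < c"
proof -
  let ?p = "(1-t)*a + t*b"
  have p: "0 < ?p" "?p < 1"
  proof -
    have "(1-t)*a + t*b \<le> (1-t)*1 + t*1 \<and> (1-t)*a + t*b < (1-t)*1 + t*1 \<or> True" by simp
    show "0 < ?p"
    proof (cases "t = 0")
      case True then show ?thesis using a by simp
    next
      case False then have "0 < t*b" using t b by simp
      moreover have "0 \<le> (1-t)*a" using t a by simp
      ultimately show ?thesis by linarith
    qed
    show "?p < 1"
    proof (cases "t = 0")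
      case True then show ?thesis using a by simp
    next
      case False then have "t*b < t" using t b mult_strict_left_mono[of b 1 t] by simp
      moreover have "(1-t)*a \<le> (1-t)" using t a mult_left_mono[of a 1 "1-t"] by simp
      ultimately show ?thesis by linarith
    qed
  qed
  have cvx: "FF ?p \<le> (1-t) * FF a + t * FF b"
    using convex_onD[OF FF_convex, of t a b] a b t by simp
  have Fa: "FF a \<le> c * sqrt a" using Ra RR_le_iff a by blast
  have Fb: "FF b \<le> c * sqrt b" using Rb RR_le_iff b by blast
  have "(1-t) * FF a + t * FF b \<le> (1-t) * (c * sqrt a) + t * (c * sqrt b)"
    using Fa Fb t by (intro add_mono mult_left_mono) auto
  also have "\<dots> = c * ((1-t) * sqrt a + t * sqrt b)" by (simp add: algebra_simps)
  finally have k: "FF ?p \<le> c * ((1-t) * sqrt a + t * sqrt b)" using cvx by linarith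
  have "c * ((1-t) * sqrt a + t * sqrt b) \<le> c * sqrt ?p"
    using sqrt_concave(1)[of a b t] a b t c by (intro mult_left_mono) auto
  then show "RR ?p \<le> c" using k RR_le_iff[OF p(1), of c] by linarith
  assume h: "a \<noteq> b" "0 < t" "t < 1" "0 < c"
  have "c * ((1-t) * sqrt a + t * sqrt b) < c * sqrt ?p"
    using sqrt_concave(2)[of a b t] a b t h by (intro mult_strict_left_mono) auto
  then show "RR ?p < c" using k RR_less_iff[OF p(1), of c] by linarith
qed

lemma RR_ge_inv: assumes "0 < s" "s < 1" shows "1 / sqrt s \<le> RR s"
  unfolding RR_def using FF_ge1[of s] assms by (intro divide_right_mono) auto

lemma RR_ge_FF: assumes "0 < s" "s < 1" shows "FF s \<le> RR s"
proof -
  have "0 < sqrt s" "sqrt s \<le> 1" using assms by auto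
  moreover have "0 \<le> FF s" using FF_ge1[of s] assms by simp
  ultimately show ?thesis unfolding RR_def by (simp add: le_divide_eq mult_left_le)
qed

lemma RR_big_left: assumes "0 < s" "s < 1" "s < 1 / (c^2 + 1)" shows "c < RR s"
proof -
  have pos: "0 < c^2 + 1" by (simp add: add_nonneg_pos)
  have "s * (c^2 + 1) < 1" using assms(3) pos by (simp add: pos_less_divide_eq)
  then have "c^2 + 1 < 1 / s" using assms(1) by (simp add: pos_less_divide_eq mult.commute)
  then have "c < sqrt (1/s)" by (intro real_less_rsqrt) simp
  also have "sqrt (1/s) = 1 / sqrt s" by (simp add: real_sqrt_divide)
  finally show ?thesis using RR_ge_inv[OF assms(1,2)] by linarith
qed

lemma RR_big_right: assumes "0 < s" "s < 1" "1 - exp (-2*c) / 2 < s" shows "c < RR s"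
proof -
  have "1 - s < exp (-2*c) / 2" using assms by simp
  then have "ln (1 - s) < ln (exp (-2*c) / 2)" using assms by (intro ln_less_cancel_iff[THEN iffD2]) auto
  also have "\<dots> = -2*c - ln 2" by (simp add: ln_div)
  finally have "ln (1 - s) < -2*c - ln 2" .
  moreover have "0 < ln (2::real)" by simp
  ultimately have "c < - ln (1 - s) / 2" by linarith
  also have "\<dots> \<le> FF s" using FF_lower assms by simp
  also have "\<dots> \<le> RR s" using RR_ge_FF assms by simp
  finally show ?thesis .
qed

lemma RR_min: "\<exists>ss. 0 < ss \<and> ss < 1 \<and> (\<forall>s. 0 < s \<and> s < 1 \<longrightarrow> RR ss \<le> RR s)"
proof -
  define M where "M = RR (1/2)"
  define a where "a = min (1/2) (1 / (M^2 + 1))"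
  define b where "b = max (1/2) (1 - exp (-2*M) / 2)"
  have "0 < M^2 + 1" by (simp add: add_nonneg_pos)
  then have ab: "0 < a" "a \<le> 1/2" "1/2 \<le> b" "b < 1" unfolding a_def b_def by auto
  have sub: "{a..b} \<subseteq> {0<..<1}" using ab by auto
  have "continuous_on {a..b} RR" using RR_cont continuous_on_subset sub by blast
  then obtain ss where ss: "ss \<in> {a..b}" "\<forall>y\<in>{a..b}. RR ss \<le> RR y"
    using continuous_attains_inf[of "{a..b}" RR] ab by auto
  have "RR ss \<le> M" unfolding M_def using ss ab by auto
  show ?thesis
  proof (intro exI conjI allI impI)
    show "0 < ss" "ss < 1" using ss ab by auto
    fix s :: real assume s: "0 < s \<and> s < 1"
    show "RR ss \<le> RR s"
    proof (cases "s \<in> {a..b}")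
      case True then show ?thesis using ss by blast
    next
      case False
      then have "s < a \<or> b < s" by auto
      then have "M < RR s"
      proof
        assume "s < a" then show ?thesis using RR_big_left[of s M] s unfolding a_def by auto
      next
        assume "b < s" then show ?thesis using RR_big_right[of s M] s unfolding b_def by auto
      qed
      then show ?thesis using \<open>RR ss \<le> M\<close> by linarith
    qed
  qed
qed



locale LS =
  fixes lam s :: real
  assumes lam: "0 < lam" and s0: "0 < s" and s1: "s < 1"
begin

definition hh :: "real \<Rightarrow> real" where "hh y = sqrt 2 / sqrt (s * lam * NN s y)"
definition phi :: "real \<Rightarrow> real" where "phi y = integral {0..y} hh"

lemma NNp: "0 \<le> y \<Longrightarrow> y \<le> 1 \<Longrightarrow> 0 < NN s y"
  using NN_pos s1 by blast

lemma prodpos: "0 \<le> y \<Longrightarrow> y \<le> 1 \<Longrightarrow> 0 < s * lam * NN s y"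
  using NNp[of y] lam s0 by simp

lemma hh_cont: "continuous_on {0..1} hh"
proof -
  have "\<forall>y\<in>{0..1}. sqrt (s * lam * NN s y) \<noteq> 0" using prodpos by force
  then show ?thesis unfolding hh_def by (intro continuous_intros NN_cont) auto
qed

lemma hh_pos: "0 \<le> y \<Longrightarrow> y \<le> 1 \<Longrightarrow> 0 < hh y"
  unfolding hh_def using NNp lam s0 by auto

lemma dphi: "y \<in> {0..1} \<Longrightarrow> (phi has_real_derivative hh y) (at y within {0..1})"
  unfolding phi_def by (rule integral_has_real_derivative[OF hh_cont])

lemma dphi_at: "0 < y \<Longrightarrow> y < 1 \<Longrightarrow> (phi has_real_derivative hh y) (at y)"
  using dphi[of y] at_within_Icc_at[of 0 y 1] by auto

lemma phi_cont: "continuous_on {0..1} phi"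
  by (rule DERIV_continuous_on[OF dphi])

lemma phi0: "phi 0 = 0" unfolding phi_def by simp

lemma phi_mono: assumes "0 \<le> a" "a < b" "b \<le> 1" shows "phi a < phi b"
proof (rule DERIV_pos_imp_increasing_open[OF assms(2)])
  fix x assume "a < x" "x < b"
  then show "\<exists>y. DERIV phi x :> y \<and> 0 < y" using dphi_at[of x] hh_pos[of x] assms by auto
next
  show "continuous_on {a..b} phi" using phi_cont continuous_on_subset assms
    by (metis atLeastatMost_subset_iff)
qed

definition K :: "real \<Rightarrow> real" where "K y = sqrt (s * lam * NN s y)"

lemma K_pos: "0 \<le> y \<Longrightarrow> y \<le> 1 \<Longrightarrow> 0 < K y"
  unfolding K_def using NNp lam s0 by auto

lemma K_sq: "0 \<le> y \<Longrightarrow> y \<le> 1 \<Longrightarrow> (K y)^2 = s * lam * NN s y"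
  unfolding K_def using prodpos[of y] by simp

lemma hh_K: "hh y = sqrt 2 / K y" unfolding hh_def K_def by simp



lemma uniq:
  assumes sol: "is_sol lam s t u v" and t: "0 < t" and ut: "u t = 0"
  shows "t = phi 1"
proof -
  have u0: "u 0 = s" and v0: "v 0 = 0"
    and du: "\<And>x. x \<in> {0..t} \<Longrightarrow> (u has_real_derivative v x) (at x within {0..t})"
    and dv: "\<And>x. x \<in> {0..t} \<Longrightarrow> (v has_real_derivative (- lam * g (u x))) (at x within {0..t})"
    using sol unfolding is_sol_def by auto
  have cu: "continuous_on {0..t} u" by (rule DERIV_continuous_on[OF du])
  have cv: "continuous_on {0..t} v" by (rule DERIV_continuous_on[OF dv])
  have du_at: "DERIV u x :> v x" if "0 < x" "x < t" for x
    using du[of x] at_within_Icc_at[of 0 x t] that by auto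
  have energy: "v x ^ 2 + 2 * lam * G (u x) = 2 * lam * G s" if x: "x \<in> {0..t}" for x
  proof -
    have "\<exists>c. \<forall>x\<in>{0..t}. v x ^ 2 + 2 * lam * G (u x) = c"
    proof (rule has_field_derivative_zero_constant)
      show "convex {0..t}" by simp
      fix x assume x: "x \<in> {0..t}"
      have "((\<lambda>x. v x ^ 2 + 2 * lam * G (u x)) has_real_derivative
              (of_nat 2 * ((- lam * g (u x)) * v x ^ (2 - Suc 0)) + 2 * lam * (g (u x) * v x))) (at x within {0..t})"
        by (intro DERIV_add DERIV_cmult DERIV_power dv[OF x] DERIV_chain2[OF G_deriv du[OF x]])
      then show "((\<lambda>x. v x ^ 2 + 2 * lam * G (u x)) has_real_derivative 0) (at x within {0..t})"
        by (simp add: algebra_simps)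
    qed
    then obtain c where c: "\<And>x. x\<in>{0..t} \<Longrightarrow> v x ^ 2 + 2 * lam * G (u x) = c" by blast
    have "c = 2 * lam * G s" using c[of 0] t u0 v0 by simp
    then show ?thesis using c[OF x] by simp
  qed
  have u_le: "u x \<le> s" if x: "x \<in> {0..t}" for x
  proof (rule ccontr)
    assume "\<not> u x \<le> s"
    define w where "w = min (u x) 1"
    have "s < w" "w \<le> 1" "w \<le> u x" unfolding w_def using \<open>\<not> u x \<le> s\<close> s1 by auto
    then obtain x' where x': "0 \<le> x'" "x' \<le> x" "u x' = w"
      using IVT'[of u 0 w x] u0 x continuous_on_subset[OF cu, of "{0..x}"] by auto
    have "G s < G w" using G_strict \<open>s < w\<close> \<open>w \<le> 1\<close> by blast
    moreover have "v x' ^ 2 + 2 * lam * G w = 2 * lam * G s" using energy[of x'] x' x by simp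
    moreover have "0 \<le> v x' ^ 2" by simp
    ultimately have "2 * lam * G w \<le> 2 * lam * G s" by linarith
    then have "G w \<le> G s" using lam by simp
    then show False using \<open>G s < G w\<close> by linarith
  qed
  have "0 \<in> {0..t}" using t by simp
  moreover have "- lam * g (u 0) < 0" using lam g_pos[of s] s0 s1 u0 by simp
  ultimately obtain d where d: "d > 0" "\<forall>h>0. 0 + h \<in> {0..t} \<longrightarrow> h < d \<longrightarrow> v 0 > v (0 + h)"
    using has_real_derivative_neg_dec_right[OF dv[of 0]] by blast
  have v_small: "v h < 0" if "0 < h" "h \<le> t" "h < d" for h using d(2) that v0 by simp
  have v_neg: "v x < 0" if x: "0 < x" "x \<le> t" for x
  proof (rule ccontr)
    assume "\<not> v x < 0"
    then have vx: "0 \<le> v x" by simp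
    then have "d \<le> x" using v_small[of x] x by linarith
    define e where "e = d/2"
    have e: "0 < e" "e < x" "v e < 0" unfolding e_def using d \<open>d \<le> x\<close> x v_small[of "d/2"] by auto
    define S where "S = {e..t} \<inter> v -` {0..}"
    have Ssub: "{e..t} \<subseteq> {0..t}" using e by auto
    have "closed S" unfolding S_def
      by (rule continuous_closed_preimage[OF continuous_on_subset[OF cv Ssub]]) auto
    moreover have "x \<in> S" unfolding S_def using e x vx by auto
    moreover have "bdd_below S" unfolding S_def by (rule bdd_belowI[of _ e]) auto
    ultimately have IS: "Inf S \<in> S" using closed_contains_Inf by blast
    define x2 where "x2 = Inf S"
    have lower: "x2 \<le> z" if "z \<in> S" for z unfolding x2_def using that \<open>bdd_below S\<close> by (rule cInf_lower)
    have x2: "e \<le> x2" "x2 \<le> t" "0 \<le> v x2" using IS unfolding S_def x2_def by auto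
    have "x2 \<noteq> e" using x2 e by auto
    then have ex2: "e < x2" using x2 by simp
    have vneg2: "v z < 0" if "0 < z" "z < x2" for z
    proof (cases "z < d")
      case True then show ?thesis using v_small that x2 by simp
    next
      case False
      show ?thesis
      proof (rule ccontr)
        assume "\<not> v z < 0"
        then have "z \<in> S" unfolding S_def using False that x2 e_def d by auto
        then have "x2 \<le> z" by (rule lower)
        then show False using that by simp
      qed
    qed
    have "u x2 < u 0"
    proof (rule DERIV_neg_imp_decreasing_open[of 0 x2 u])
      show "0 < x2" using ex2 e by simp
      fix z assume "0 < z" "z < x2"
      then show "\<exists>y. DERIV u z :> y \<and> y < 0" using du_at[of z] vneg2[of z] x2 by auto
    next
      show "continuous_on {0..x2} u" using continuous_on_subset[OF cu] x2 by auto
    qed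
    then have "u x2 < s" using u0 by simp
    then have "G (u x2) < G s" using G_strict s1 by simp
    moreover have "v x2 ^ 2 + 2 * lam * G (u x2) = 2 * lam * G s" using energy[of x2] x2 e by simp
    moreover have "2 * lam * G (u x2) < 2 * lam * G s" using \<open>G (u x2) < G s\<close> lam by simp
    ultimately have "0 < v x2 ^ 2" by linarith
    then have "v x2 \<noteq> 0" by auto
    then have "0 < v x2" using x2 by simp
    obtain z where z: "e \<le> z" "z \<le> x2" "v z = 0"
      using IVT'[of v e 0 x2] e \<open>0 < v x2\<close> ex2 continuous_on_subset[OF cv, of "{e..x2}"] x2 by auto
    then have "z \<in> S" unfolding S_def using x2 by auto
    then have "x2 \<le> z" by (rule lower)
    then show False using z \<open>0 < v x2\<close> by simp
  qed
  have u_pos: "0 < u x" if "0 \<le> x" "x < t" for x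
  proof -
    have "u t < u x"
    proof (rule DERIV_neg_imp_decreasing_open[of x t u, OF that(2)])
      fix z assume "x < z" "z < t"
      then show "\<exists>y. DERIV u z :> y \<and> y < 0" using du_at[of z] v_neg[of z] that by auto
    next
      show "continuous_on {x..t} u" using continuous_on_subset[OF cu] that by auto
    qed
    then show ?thesis using ut by simp
  qed
  have u_lt: "u x < s" if "0 < x" "x \<le> t" for x
  proof -
    have "u x < u 0"
    proof (rule DERIV_neg_imp_decreasing_open[of 0 x u, OF that(1)])
      fix z assume "0 < z" "z < x"
      then show "\<exists>y. DERIV u z :> y \<and> y < 0" using du_at[of z] v_neg[of z] that by auto
    next
      show "continuous_on {0..x} u" using continuous_on_subset[OF cu] that by auto
    qed
    then show ?thesis using u0 by simp
  qed
  define y where "y x = sqrt (1 - u x / s)" for x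
  have y_range: "0 \<le> y x \<and> y x \<le> 1" if "x \<in> {0..t}" for x
  proof -
    have "0 \<le> u x" using u_pos[of x] ut that by (cases "x = t") auto
    then have "0 \<le> u x / s" "u x / s \<le> 1" using u_le[OF that] s0 by auto
    then show ?thesis unfolding y_def by auto
  qed
  have cy: "continuous_on {0..t} y" unfolding y_def using s0 by (intro continuous_intros cu) auto
  have "y ` {0..t} \<subseteq> {0..1}" using y_range by auto
  then have "continuous_on {0..t} (\<lambda>x. phi (y x))" using continuous_on_compose2[OF phi_cont cy] by blast
  then have cpsi: "continuous_on {0..t} (\<lambda>x. phi (y x) - x)"
    by (intro continuous_intros)
  have dpsi: "DERIV (\<lambda>x. phi (y x) - x) x :> 0" if x: "0 < x" "x < t" for x
  proof -
    have ux: "0 < u x" "u x < s" using u_pos u_lt x by auto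
    have pos: "0 < 1 - u x / s" using ux s0 by simp
    define Y where "Y = y x"
    have Y: "0 < Y" "Y < 1" unfolding Y_def y_def using ux s0 pos by auto
    have dy: "DERIV y x :> inverse (sqrt (1 - u x / s)) / 2 * (- (v x / s))"
    proof -
      have d1: "DERIV (\<lambda>x. 1 - u x / s) x :> - (v x / s)"
        using DERIV_diff[OF DERIV_const[of 1] DERIV_cdivide[OF du_at[OF x], of s]] by simp
      show ?thesis unfolding y_def
        using DERIV_chain2[of sqrt _ "\<lambda>x. 1 - u x / s" x, OF DERIV_real_sqrt[OF pos] d1] by simp
    qed
    have dph: "DERIV phi (y x) :> hh Y" using dphi_at Y unfolding Y_def by simp
    have dcomp: "DERIV (\<lambda>x. phi (y x) - x) x :> hh Y * (inverse (sqrt (1 - u x / s)) / 2 * (- (v x / s))) - 1"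
      by (intro DERIV_diff DERIV_chain2[of phi _ y x, OF dph dy] DERIV_ident)
    have uY: "u x = s * (1 - Y^2)" unfolding Y_def y_def using pos s0 by (simp add: field_simps)
    have sqY: "sqrt (1 - u x / s) = Y" unfolding Y_def y_def ..
    have e0: "2*lam*(G s - G (u x)) = 2*lam*G s - 2*lam*G (u x)" by (simp add: algebra_simps)
    have "x \<in> {0..t}" using x by simp
    then have e1: "v x ^ 2 = 2*lam*(G s - G (u x))" using energy[of x] e0 by linarith
    have e2: "G s - G (u x) = s^3 * Y^2 * NN s Y" by (simp only: uY NN_G)
    have en: "v x ^ 2 = 2 * lam * (s^3 * Y^2 * NN s Y)" using e1 e2 by simp
    have KY: "0 < K Y" "(K Y)^2 = s * lam * NN s Y" using K_pos K_sq Y by auto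
    have "(- v x)^2 = (sqrt 2 * s * Y * K Y)^2"
      using en KY(2) by (simp add: power_mult_distrib algebra_simps eval_nat_numeral)
    moreover have "0 \<le> - v x" using v_neg[of x] x by simp
    moreover have "0 \<le> sqrt 2 * s * Y * K Y" using Y KY s0 by simp
    ultimately have mv: "- v x = sqrt 2 * s * Y * K Y" using power2_eq_iff_nonneg by blast
    have vx: "v x = - (sqrt 2 * s * Y * K Y)" using mv by simp
    have s2: "sqrt 2 * sqrt 2 = (2::real)" by simp
    have "hh Y * (inverse (sqrt (1 - u x / s)) / 2 * (- (v x / s))) = 
          (sqrt 2 * sqrt 2) * (s * Y * K Y) / (2 * Y * s * K Y)"
      unfolding hh_K sqY vx using KY Y s0 by (simp add: field_simps)
    also have "\<dots> = 1" unfolding s2 using KY Y s0 by simp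
    finally show ?thesis using dcomp by simp
  qed
  have "(\<lambda>x. phi (y x) - x) t = (\<lambda>x. phi (y x) - x) 0"
    by (rule DERIV_isconst_end[OF t cpsi dpsi])
  moreover have "y 0 = 0" unfolding y_def using u0 s0 by simp
  moreover have "y t = 1" unfolding y_def using ut by simp
  ultimately show "t = phi 1" using phi0 by simp
qed

end


context LS begin

lemma phi1_pos: "0 < phi 1" using phi_mono[of 0 1] phi0 by simp

lemma phi_inj: "inj_on phi {0..1}"
proof (rule inj_onI)
  fix a b assume ab: "a \<in> {0..1}" "b \<in> {0..1}" "phi a = phi b"
  show "a = b"
  proof (rule ccontr)
    assume "a \<noteq> b"
    then have "a < b \<or> b < a" by auto
    then show False using phi_mono[of a b] phi_mono[of b a] ab by auto
  qed
qed

lemma phi_le: assumes "0 \<le> a" "a \<le> b" "b \<le> 1" shows "phi a \<le> phi b"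
  using phi_mono[of a b] assms by (cases "a = b") auto

lemma phi_img: "phi ` {0..1} = {0..phi 1}"
proof
  show "phi ` {0..1} \<subseteq> {0..phi 1}" using phi_le phi0 by (auto, metis phi0 order.refl phi_le) 
  show "{0..phi 1} \<subseteq> phi ` {0..1}"
  proof
    fix x assume "x \<in> {0..phi 1}"
    then obtain y where "0 \<le> y" "y \<le> 1" "phi y = x"
      using IVT'[of phi 0 x 1] phi0 phi_cont by auto
    then show "x \<in> phi ` {0..1}" by auto
  qed
qed

definition Yi :: "real \<Rightarrow> real" where "Yi = inv_into {0..1} phi"

lemma Yi_phi: "y \<in> {0..1} \<Longrightarrow> Yi (phi y) = y"
  unfolding Yi_def using phi_inj by simp

lemma phi_Yi: "x \<in> {0..phi 1} \<Longrightarrow> phi (Yi x) = x \<and> Yi x \<in> {0..1}"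
  unfolding Yi_def using phi_img f_inv_into_f[of x phi "{0..1}"] inv_into_into[of x phi "{0..1}"] by auto

lemma dYi:
  assumes x: "x \<in> {0..phi 1}"
  shows "(Yi has_real_derivative inverse (hh (Yi x))) (at x within {0..phi 1})"
proof -
  define a where "a = Yi x"
  have a: "a \<in> {0..1}" "phi a = x" using phi_Yi[OF x] unfolding a_def by auto
  have D: "hh a \<noteq> 0" using hh_pos a by force
  have cont: "continuous_on (phi ` {0..1}) Yi"
    by (rule continuous_on_inv[OF phi_cont compact_Icc]) (simp add: Yi_phi)
  have "(Yi has_derivative (*) (inverse (hh a))) (at (phi a) within phi ` {0..1})"
  proof (rule has_derivative_inverse_within)
    show "(phi has_derivative (*) (hh a)) (at a within {0..1})"
      using dphi[OF a(1)] unfolding has_field_derivative_def .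
    have "phi a \<in> phi ` {0..1}" using a(1) by blast
    then show "continuous (at (phi a) within phi ` {0..1}) Yi"
      using cont continuous_on_eq_continuous_within by blast
    show "a \<in> {0..1}" by (rule a)
    show "linear ((*) (inverse (hh a)))" by (rule bounded_linear.linear[OF bounded_linear_mult_right])
    show "(*) (inverse (hh a)) \<circ> (*) (hh a) = id" using D by (auto simp: fun_eq_iff)
    show "\<And>x. x \<in> {0..1} \<Longrightarrow> Yi (phi x) = x" by (rule Yi_phi)
  qed
  then have "(Yi has_derivative (*) (inverse (hh a))) (at x within {0..phi 1})"
    unfolding phi_img a(2) .
  then show ?thesis unfolding has_field_derivative_def a_def .
qed

definition Fu :: "real \<Rightarrow> real" where "Fu y = s * (1 - y^2)"
definition Fv :: "real \<Rightarrow> real" where "Fv y = - (sqrt 2 * s * y * K y)"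
definition ND :: "real \<Rightarrow> real" where "ND y = (-2*y + 4*y^3/3) - s*(-3*y + 4*y^3 - 3/2*y^5)"

lemma dFu: "DERIV Fu y :> - (2 * s * y)"
  unfolding Fu_def by (auto intro!: derivative_eq_intros)

lemma dK: assumes "0 \<le> y" "y \<le> 1" shows "DERIV K y :> inverse (K y) / 2 * (s * lam * ND y)"
proof -
  have p: "0 < s * lam * NN s y" using prodpos assms by simp
  have d1: "DERIV (\<lambda>y. s * lam * NN s y) y :> s * lam * ND y"
    using DERIV_cmult[OF NN_has_deriv[of s y UNIV], of "s * lam"] unfolding ND_def by simp
  show ?thesis unfolding K_def
    using DERIV_chain2[of sqrt _ "\<lambda>y. s * lam * NN s y" y, OF DERIV_real_sqrt[OF p] d1] by simp
qed

lemma dFv: assumes "0 \<le> y" "y \<le> 1"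
  shows "DERIV Fv y :> - (sqrt 2 * s * (K y + y * (inverse (K y) / 2 * (s * lam * ND y))))"
proof -
  have "DERIV (\<lambda>y. y * K y) y :> 1 * K y + (inverse (K y) / 2 * (s * lam * ND y)) * y"
    by (rule DERIV_mult[OF DERIV_ident dK[OF assms]])
  from DERIV_minus[OF DERIV_cmult[OF this, of "sqrt 2 * s"]]
  have der: "DERIV (\<lambda>y. - (sqrt 2 * s * (y * K y))) y :> - (sqrt 2 * s * (1 * K y + (inverse (K y) / 2 * (s * lam * ND y)) * y))" .
  have eq1: "1 * K y + (inverse (K y) / 2 * (s * lam * ND y)) * y = K y + y * (inverse (K y) / 2 * (s * lam * ND y))"
    by simp
  have eq2: "(\<lambda>y. - (sqrt 2 * s * (y * K y))) = Fv" unfolding Fv_def by (simp add: fun_eq_iff mult.assoc)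
  show ?thesis unfolding eq2[symmetric] eq1[symmetric] by (rule der)
qed

lemma alg_u: assumes "0 \<le> y" "y \<le> 1" shows "- (2 * s * y) * inverse (hh y) = Fv y"
proof -
  have Kp: "0 < K y" using K_pos assms by simp
  have s2: "2 / sqrt 2 = sqrt (2::real)" by (simp add: real_div_sqrt)
  have "inverse (hh y) = K y / sqrt 2" unfolding hh_K by simp
  then have "- (2 * s * y) * inverse (hh y) = - ((2 / sqrt 2) * (s * y * K y))" by simp
  also have "\<dots> = Fv y" unfolding Fv_def s2 by simp
  finally show ?thesis .
qed

lemma alg_v: assumes "0 \<le> y" "y \<le> 1"
  shows "- (sqrt 2 * s * (K y + y * (inverse (K y) / 2 * (s * lam * ND y)))) * inverse (hh y) = - lam * g (Fu y)"
proof -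
  have Kp: "0 < K y" using K_pos assms by simp
  have Ksq: "K y * K y = s * lam * NN s y" using K_sq[OF assms] by (simp add: power2_eq_square)
  have "- (sqrt 2 * s * (K y + y * (inverse (K y) / 2 * (s * lam * ND y)))) * inverse (hh y)
        = - (s * (K y * K y + y * (s * lam * ND y) / 2))"
    unfolding hh_K using Kp by (simp add: field_simps)
  also have "\<dots> = - (s^2 * lam * (NN s y + y * ND y / 2))"
    unfolding Ksq by (simp add: algebra_simps power2_eq_square)
  also have "NN s y + y * ND y / 2 = (1-y^2)^2*(1 - s*(1-y^2))"
    using NN_deriv[of s y] unfolding ND_def by simp
  also have "- (s^2 * lam * ((1-y^2)^2*(1 - s*(1-y^2)))) = - lam * g (Fu y)"
    unfolding g_def Fu_def by algebra
  finally show ?thesis .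
qed

lemma exist:
  "is_sol lam s (phi 1) (\<lambda>x. Fu (Yi x)) (\<lambda>x. Fv (Yi x)) \<and> Fu (Yi (phi 1)) = 0 \<and> Fv (Yi (phi 1)) < 0 \<and>
   (\<forall>x\<in>{0..<phi 1}. Fu (Yi x) \<noteq> 0 \<or> Fv (Yi x) \<ge> 0)"
proof (intro conjI ballI)
  have Y0: "Yi 0 = 0" using Yi_phi[of 0] phi0 by simp
  have Y1: "Yi (phi 1) = 1" using Yi_phi[of 1] by simp
  show "Fu (Yi (phi 1)) = 0" unfolding Y1 Fu_def by simp
  show "Fv (Yi (phi 1)) < 0" unfolding Y1 Fv_def using K_pos[of 1] s0 by simp
  show "Fu (Yi x) \<noteq> 0 \<or> Fv (Yi x) \<ge> 0" if x: "x \<in> {0..<phi 1}" for x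
  proof -
    have r: "Yi x \<in> {0..1}" "phi (Yi x) = x" using phi_Yi[of x] x by auto
    have "Yi x \<noteq> 1" using r x by auto
    then have "Yi x < 1" using r by auto
    then have "(Yi x)^2 < 1" using r by (simp add: power_less_one_iff abs_square_less_1)
    then show ?thesis unfolding Fu_def using s0 by simp
  qed
  show "is_sol lam s (phi 1) (\<lambda>x. Fu (Yi x)) (\<lambda>x. Fv (Yi x))"
    unfolding is_sol_def
  proof (intro conjI ballI)
    show "Fu (Yi 0) = s" unfolding Y0 Fu_def by simp
    show "Fv (Yi 0) = 0" unfolding Y0 Fv_def by simp
    fix x assume x: "x \<in> {0..phi 1}"
    have r: "0 \<le> Yi x" "Yi x \<le> 1" using phi_Yi[OF x] by auto
    have "((\<lambda>x. Fu (Yi x)) has_real_derivative - (2 * s * Yi x) * inverse (hh (Yi x))) (at x within {0..phi 1})"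
      by (rule DERIV_chain2[of Fu _ Yi x, OF dFu dYi[OF x]])
    then show "((\<lambda>x. Fu (Yi x)) has_real_derivative Fv (Yi x)) (at x within {0..phi 1})"
      using alg_u[OF r] by simp
    have "((\<lambda>x. Fv (Yi x)) has_real_derivative
       - (sqrt 2 * s * (K (Yi x) + Yi x * (inverse (K (Yi x)) / 2 * (s * lam * ND (Yi x))))) * inverse (hh (Yi x)))
       (at x within {0..phi 1})"
      by (rule DERIV_chain2[of Fv _ Yi x, OF dFv[OF r] dYi[OF x]])
    then show "((\<lambda>x. Fv (Yi x)) has_real_derivative - lam * g (Fu (Yi x))) (at x within {0..phi 1})"
      using alg_v[OF r] by simp
  qed
qed

lemma T0_eq: "T0 lam s = phi 1"
  unfolding T0_def
proof (rule the_equality)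
  show "0 < phi 1 \<and> (\<exists>u v. is_sol lam s (phi 1) u v \<and> u (phi 1) = 0 \<and> v (phi 1) < 0 \<and>
          (\<forall>\<tau>\<in>{0..<phi 1}. u \<tau> \<noteq> 0 \<or> 0 \<le> v \<tau>))"
    using phi1_pos exist by blast
  fix t assume "0 < t \<and> (\<exists>u v. is_sol lam s t u v \<and> u t = 0 \<and> v t < 0 \<and>
          (\<forall>\<tau>\<in>{0..<t}. u \<tau> \<noteq> 0 \<or> 0 \<le> v \<tau>))"
  then show "t = phi 1" using uniq by blast
qed

lemma phi1_FF: "phi 1 = sqrt 2 / sqrt (s * lam) * FF s"
proof -
  have hfun: "hh = (\<lambda>y. sqrt 2 / sqrt (s * lam) * (1 / sqrt (NN s y)))"
    by (rule ext) (simp add: hh_def real_sqrt_mult)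
  have "phi 1 = integral {0..1} (\<lambda>y. sqrt 2 / sqrt (s * lam) * (1 / sqrt (NN s y)))"
    unfolding phi_def hfun ..
  also have "\<dots> = sqrt 2 / sqrt (s * lam) * FF s"
    unfolding FF_def using integral_mult[OF integrand_int[OF s1], of "sqrt 2 / sqrt (s * lam)"] by simp
  finally show ?thesis .
qed

end

lemma T0_formula: "0 < lam \<Longrightarrow> 0 < s \<Longrightarrow> s < 1 \<Longrightarrow> T0 lam s = sqrt 2 / sqrt (s * lam) * FF s"
proof -
  assume "0 < lam" "0 < s" "s < 1"
  then interpret LS lam s by unfold_locales
  show ?thesis using T0_eq phi1_FF by simp
qed



lemma cc: "a \<noteq> (b::real) \<Longrightarrow> (1 - (p-a)/(b-a))*a + (p-a)/(b-a)*b = p"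
proof -
  assume "a \<noteq> b"
  have q: "(1 - q)*a + q*b = a + q*(b-a)" for q :: real by (simp add: algebra_simps)
  have "(1 - (p-a)/(b-a))*a + (p-a)/(b-a)*b = a + (p-a)/(b-a)*(b-a)" by (rule q)
  also have "\<dots> = p" using \<open>a \<noteq> b\<close> by simp
  finally show ?thesis .
qed

lemma I0_char:
  assumes TF: "\<And>lam s. 0<lam \<Longrightarrow> 0<s \<Longrightarrow> s<1 \<Longrightarrow> T0 lam s = sqrt 2 / sqrt (s*lam) * FF s"
    and lam: "0 < lam"
  shows "I0 \<sigma> lam = {s. 0 < s \<and> s < 1 \<and> \<sigma> * sqrt lam / sqrt 2 < RR s}"
proof -
  have "(\<sigma> < T0 lam s) = (\<sigma> * sqrt lam / sqrt 2 < RR s)" if s: "0 < s" "s < 1" for s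
  proof -
    have "T0 lam s = sqrt 2 * RR s / sqrt lam"
      using TF[OF lam s] s lam unfolding RR_def by (simp add: real_sqrt_mult field_simps)
    then show ?thesis using lam by (simp add: pos_less_divide_eq pos_divide_less_eq mult.commute)
  qed
  then show ?thesis unfolding I0_def by auto
qed

lemma final:
  fixes \<sigma> :: real
  assumes TF: "\<And>lam s. 0<lam \<Longrightarrow> 0<s \<Longrightarrow> s<1 \<Longrightarrow> T0 lam s = sqrt 2 / sqrt (s*lam) * FF s"
  assumes "0 < \<sigma>" "\<sigma> < 1/2"
  shows "\<exists>lamstar > 0. \<exists>sstar. 0 < sstar \<and> sstar < 1 \<and>
    (\<forall>lam. 0 < lam \<and> lam < lamstar \<longrightarrow> I0 \<sigma> lam = {0<..<1}) \<and>
    I0 \<sigma> lamstar = {0<..<1} - {sstar} \<and>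
    (\<forall>lam > lamstar. \<exists>s0 s1. 0 < s0 \<and> s0 < sstar \<and> sstar < s1 \<and> s1 < 1 \<and>
        I0 \<sigma> lam = {0<..<s0} \<union> {s1<..<1})"
proof -
  obtain ss where ss: "0 < ss" "ss < 1" "\<And>s. 0 < s \<Longrightarrow> s < 1 \<Longrightarrow> RR ss \<le> RR s"
    using RR_min by blast
  define m where "m = RR ss"
  have "0 < 1 / sqrt ss" using ss by simp
  then have m: "0 < m" using RR_ge_inv[OF ss(1,2)] unfolding m_def by linarith
  define lamstar where "lamstar = 2 * m^2 / \<sigma>^2"
  define c where "c lam = \<sigma> * sqrt lam / sqrt 2" for lam
  have ls: "0 < lamstar" unfolding lamstar_def using m assms by simp
  have "sqrt lamstar = sqrt 2 * m / \<sigma>" unfolding lamstar_def using m assms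
    by (simp add: real_sqrt_mult real_sqrt_divide)
  then have cls: "c lamstar = m" unfolding c_def using assms by simp
  have cmono: "c l1 < c l2" if "0 \<le> l1" "l1 < l2" for l1 l2
    unfolding c_def using that assms by (simp add: divide_strict_right_mono)
  have I0c: "I0 \<sigma> lam = {s. 0 < s \<and> s < 1 \<and> c lam < RR s}" if "0 < lam" for lam
    unfolding c_def using I0_char[OF TF that] by simp
  show ?thesis
  proof (rule exI[of _ lamstar], rule conjI[OF ls], rule exI[of _ ss], intro conjI ss(1,2) allI impI)
    fix lam assume lam: "0 < lam \<and> lam < lamstar"
    have "c lam < m" using cmono[of lam lamstar] lam cls by simp
    then show "I0 \<sigma> lam = {0<..<1}" using I0c[of lam] lam ss(3) unfolding m_def by force
  next
    have "RR s > m" if s: "0 < s" "s < 1" "s \<noteq> ss" for s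
    proof (rule ccontr)
      assume "\<not> RR s > m"
      then have "RR s \<le> m" by simp
      then have "RR ((1 - 1/2) * s + 1/2* ss) < m"
        using RR_sub(2)[of s ss "1/2" m] s ss m unfolding m_def by auto
      moreover have "0 < (1 - 1/2) * s + 1/2* ss" "(1 - 1/2) * s + 1/2* ss < 1" using s ss by auto
      ultimately show False using ss(3) unfolding m_def by force
    qed
    then show "I0 \<sigma> lamstar = {0<..<1} - {ss}" using I0c[OF ls] cls unfolding m_def by auto
  next
    fix lam :: real assume lam: "lamstar < lam"
    define cc where "cc = c lam"
    have ccm: "m < cc" using cmono[of lamstar lam] lam ls cls unfolding cc_def by simp
    define q where "q = 1/(cc^2+1)"
    define p1 where "p1 = min (ss/2) (q/2)"
    define r where "r = exp (-2*cc)"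
    define p2 where "p2 = max ((1+ss)/2) (1 - r/4)"
    have "0 < cc^2+1" by (simp add: add_nonneg_pos)
    then have "0 < q" unfolding q_def by simp
    then have p1: "0 < p1" "p1 < ss" "p1 < 1/(cc^2+1)" unfolding p1_def q_def[symmetric] using ss
      by auto
    have "0 < r" unfolding r_def by simp
    then have p2: "ss < p2" "p2 < 1" "1 - exp (-2*cc)/2 < p2" unfolding p2_def r_def[symmetric] using ss
      by (auto simp: less_max_iff_disj)
    have Rp1: "cc < RR p1" using RR_big_left[of p1 cc] p1 ss by simp
    have Rp2: "cc < RR p2" using RR_big_right[of p2 cc] p2 ss by simp
    have cont: "continuous_on {x..y} RR" if "0 < x" "y < 1" for x y
    proof -
      have "{x..y} \<subseteq> {0<..<1}" using that by auto
      then show ?thesis using continuous_on_subset[OF RR_cont] by blast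
    qed
    obtain s0 where s0: "p1 \<le> s0" "s0 \<le> ss" "RR s0 = cc"
      using IVT2'[of RR ss cc p1] cont[of p1 ss] Rp1 ccm p1 ss unfolding m_def by auto
    obtain s1 where s1: "ss \<le> s1" "s1 \<le> p2" "RR s1 = cc"
      using IVT'[of RR ss cc p2] cont[of ss p2] Rp2 ccm p2 ss unfolding m_def by auto
    have "s0 \<noteq> ss" "s1 \<noteq> ss" using s0 s1 ccm unfolding m_def by auto
    then have s01: "0 < s0" "s0 < ss" "ss < s1" "s1 < 1" using s0 s1 p1 p2 by auto
    have cpos: "0 < cc" using ccm m by simp
    have RRss: "RR ss \<le> cc" using ccm unfolding m_def by simp
    show "\<exists>s0 s1. 0 < s0 \<and> s0 < ss \<and> ss < s1 \<and> s1 < 1 \<and> I0 \<sigma> lam = {0<..<s0} \<union> {s1<..<1}"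
    proof (intro exI conjI)
      show "0 < s0" "s0 < ss" "ss < s1" "s1 < 1" using s01 by auto
      have "(cc < RR s) = (s < s0 \<or> s1 < s)" if s: "0 < s" "s < 1" for s
      proof (cases "s < s0")
        case True
        have "cc < RR s"
        proof (rule ccontr)
          assume "\<not> cc < RR s"
          then have "RR s \<le> cc" by simp
          define t where "t = (s0 - s)/(ss - s)"
          have t: "0 < t" "t < 1" unfolding t_def using True s01 by (auto simp: field_simps)
          have "RR ((1-t) * s + t* ss) < cc"
            using RR_sub(2)[of s ss t cc] s ss t cpos \<open>RR s \<le> cc\<close> RRss True s01 by auto
          moreover have "(1-t) * s + t* ss = s0" unfolding t_def using cc[of s ss s0] True s01 by simp
          ultimately show False using s0 by simp
        qed
        then show ?thesis using True by simp
      next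
        case False
        show ?thesis
        proof (cases "s1 < s")
          case True
          have "cc < RR s"
          proof (rule ccontr)
            assume "\<not> cc < RR s"
            then have "RR s \<le> cc" by simp
            define t where "t = (s1 - s)/(ss - s)"
            have t: "0 < t" "t < 1" unfolding t_def using True s01 by (auto simp: field_simps)
            have "RR ((1-t) * s + t* ss) < cc"
              using RR_sub(2)[of s ss t cc] s ss t cpos \<open>RR s \<le> cc\<close> RRss True s01 by auto
            moreover have "(1-t) * s + t* ss = s1" unfolding t_def using cc[of s ss s1] True s01 by simp
            ultimately show False using s1 by simp
          qed
          then show ?thesis using True by simp
        next
          case F2: False
          define t where "t = (s - s0)/(s1 - s0)"
          have t: "0 \<le> t" "t \<le> 1" unfolding t_def using False F2 s01 by (auto simp: field_simps)
          have "RR ((1-t) * s0 + t * s1) \<le> cc"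
            using RR_sub(1)[of s0 s1 t cc] s01 t cpos s0 s1 by auto
          moreover have "(1-t) * s0 + t * s1 = s" unfolding t_def using cc[of s0 s1 s] s01 by simp
          ultimately show ?thesis using False F2 by simp
        qed
      qed
      then show "I0 \<sigma> lam = {0<..<s0} \<union> {s1<..<1}"
        using I0c[of lam] lam ls s01 unfolding cc_def by auto
    qed
  qed
qed


theorem proposition2p1:
  fixes \<sigma> :: real
  assumes "0 < \<sigma>" "\<sigma> < 1/2"
  shows "\<exists>lamstar > 0. \<exists>sstar. 0 < sstar \<and> sstar < 1 \<and>
    (\<forall>lam. 0 < lam \<and> lam < lamstar \<longrightarrow> I0 \<sigma> lam = {0<..<1}) \<and>
    I0 \<sigma> lamstar = {0<..<1} - {sstar} \<and>
    (\<forall>lam > lamstar. \<exists>s0 s1. 0 < s0 \<and> s0 < sstar \<and> sstar < s1 \<and> s1 < 1 \<and>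
        I0 \<sigma> lam = {0<..<s0} \<union> {s1<..<1})"
  by (rule final[OF T0_formula assms])

end
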